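(* Let $d\ge1$, $N=2^d$, $Q\ge 1$, and let $\Omega=\{(x,y,m):0\le x\le 1,\ 0<m\le y\le Qm\}$. Let $B:\Omega\to\mathbb{R}$ satisfy \[ B(x,y,m)\ge \frac1N\sum_{i=1}^N B(x_i,y_i,m_i) \] whenever $(x,y,m)\in\Omega$, $(x_i,y_i,m_i)\in\Omega$ for $i=1,\dots,N$, $\frac1N\sum x_i=x$, $\frac1N\sum y_i=y$ and $\min_i m_i=m$. Then $B$ is decreasing in $m$: if $(x,y,m_1),(x,y,m_2)\in\Omega$ with $m_1\le m_2$, then $B(x,y,m_1)\ge B(x,y,m_2)$. *)

theory Defs
  imports Main "HOL-Analysis.Analysis"
begin

definition Omega :: "real \<Rightarrow> (real \<times> real \<times> real) set" where
  "Omega Q = {(x, y, m). 0 \<le> x \<and> x \<le> 1 \<and> 0 < m \<and> m \<le> y \<and> y \<le> Q * m}"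

end

theory Submission
  imports Defs
begin

theorem mainTheorem4:
  fixes d :: nat and Q :: real and B :: "real \<Rightarrow> real \<Rightarrow> real \<Rightarrow> real"
  assumes d: "d \<ge> 1"
    and Q: "Q \<ge> 1"
    and concav: "\<And>x y m (xs :: nat \<Rightarrow> real) ys ms.
        (x, y, m) \<in> Omega Q \<Longrightarrow>
        (\<forall>i<2^d. (xs i, ys i, ms i) \<in> Omega Q) \<Longrightarrow>
        (\<Sum>i<2^d. xs i) / 2^d = x \<Longrightarrow>
        (\<Sum>i<2^d. ys i) / 2^d = y \<Longrightarrow>
        Min (ms ` {..<2^d}) = m \<Longrightarrow>
        B x y m \<ge> (\<Sum>i<2^d. B (xs i) (ys i) (ms i)) / 2^d"
    and p1: "(x, y, m1) \<in> Omega Q"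
    and p2: "(x, y, m2) \<in> Omega Q"
    and le: "m1 \<le> m2"
  shows "B x y m1 \<ge> B x y m2"
proof -
  define N :: nat where "N = 2^d"
  have N2: "N \<ge> 2" unfolding N_def using d
    by (metis one_le_numeral power_increasing power_one_right)
  define ms where "ms = (\<lambda>i::nat. if i = 0 then m1 else m2)"
  have U: "{..<N} = insert 0 {1..<N}" using N2 by auto
  have img: "ms ` {..<N} = {m1, m2}" using N2 unfolding ms_def
    apply (auto simp: image_iff)
    by (metis Suc_1 Suc_le_lessD one_neq_zero)
  have mn: "Min (ms ` {..<N}) = m1" using img le by (simp add: min_def)
  have sx: "(\<Sum>i<N. x) / N = x" using N2 by simp
  have sy: "(\<Sum>i<N. y) / N = y" using N2 by simp
  have mem: "\<forall>i<N. (x, y, ms i) \<in> Omega Q" using p1 p2 unfolding ms_def by auto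
  have "B x y m1 \<ge> (\<Sum>i<N. B x y (ms i)) / N"
    using concav[OF p1, of "\<lambda>_. x" "\<lambda>_. y" ms] mem sx sy mn unfolding N_def by simp
  moreover have "(\<Sum>i<N. B x y (ms i)) = B x y m1 + (real N - 1) * B x y m2"
  proof -
    have "(\<Sum>i<N. B x y (ms i)) = B x y (ms 0) + (\<Sum>i\<in>{1..<N}. B x y (ms i))"
      by (subst U) simp
    also have "(\<Sum>i\<in>{1..<N}. B x y (ms i)) = (\<Sum>i\<in>{1..<N}. B x y m2)"
      by (rule sum.cong) (auto simp: ms_def)
    finally show ?thesis using N2 by (simp add: ms_def of_nat_diff)
  qed
  ultimately have "real N * B x y m1 \<ge> B x y m1 + (real N - 1) * B x y m2"
    using N2 by (simp add: field_simps)
  hence "(real N - 1) * B x y m1 \<ge> (real N - 1) * B x y m2" by (simp add: algebra_simps)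
  moreover have "real N - 1 > 0" using N2 by simp
  ultimately show ?thesis by simp
qed

end
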